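(* Let $\mathcal{V}$ be a finite set of nodes, $\mathcal{F}$ a finite set of flows, each flow $f$ with rate $\lambda_f>0$ and path node set $\mathcal{V}_f\subseteq\mathcal{V}$, each node $v$ with capacity $c_v>0$, and assume $\max_f\lambda_f\le\min_v c_v$. Fix $\mathcal{U}\subseteq\mathcal{V}$ and let $OPT(Q2,\mathcal{U})$ be the optimal value of the relaxed allocation problem Q2 for $\mathcal{U}$ (defined in the context). Let $\pi_{\mathrm{GCA}}^{\mathcal{U}}$ be the total rate of flows fully assigned to nodes of $\mathcal{U}$ by the GCA algorithm (defined in the context). Then $\pi_{\mathrm{GCA}}^{\mathcal{U}}\ge\frac13\,OPT(Q2,\mathcal{U})$.
   Context: Problem Q2 for $\mathcal{U}$: maximize $\sum_{f\in\mathcal{F}}\sum_{v\in\mathcal{V}_f\cap\mathcal{U}}\lambda_f^v$ over nonnegative $(\lambda_f^v)$ subject to $\sum_{f}\lambda_f^v\le c_v$ for $v\in\mathcal{U}$, $\lambda_f^v=0$ for $v\notin\mathcal{U}$, and $\sum_{v\in\mathcal{U}}\lambda_f^v\le\lambda_f$ for all $f$. Write $\mathcal{U}_f=\mathcal{V}_f\cap\mathcal{U}$ and $\mathcal{F}_{\mathcal{U}}=\{f:\mathcal{U}_f\ne\emptyset\}$; $c'_v$ denotes the remaining capacity of node $v$ (initially $c_v$). GCA algorithm: sort $\mathcal{F}_{\mathcal{U}}$ in nonincreasing order of rate. Phase I: for each flow $f$ in this order, if some $v\in\mathcal{U}_f$ has $c'_v\ge\lambda_f$, set $\lambda_f^v=\lambda_f$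 for one such $v$ and decrease $c'_v$ by $\lambda_f$. Phase II: for each flow $f$ not yet assigned, in the sorted order, if $\sum_{v\in\mathcal{U}_f}c'_v\ge\lambda_f$, split $f$ and assign it fully to a subset of the nodes of $\mathcal{U}_f$ using their remaining capacities. *)

theory Defs
  imports Complex_Main
begin

text \<open>Feasible points of problem Q2 for the node set U:
  x f v is the amount of flow f allocated to node v.\<close>
definition q2_feasible ::
  "'f set \<Rightarrow> 'v set \<Rightarrow> ('f \<Rightarrow> real) \<Rightarrow> ('v \<Rightarrow> real) \<Rightarrow> 'v set
     \<Rightarrow> ('f \<Rightarrow> 'v \<Rightarrow> real) \<Rightarrow> bool" where
  "q2_feasible F V lam c U x \<longleftrightarrow>
     (\<forall>f\<in>F. \<forall>v\<in>V. 0 \<le> x f v) \<and>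
     (\<forall>v\<in>U. (\<Sum>f\<in>F. x f v) \<le> c v) \<and>
     (\<forall>f\<in>F. \<forall>v\<in>V - U. x f v = 0) \<and>
     (\<forall>f\<in>F. (\<Sum>v\<in>U. x f v) \<le> lam f)"

definition q2_objective ::
  "'f set \<Rightarrow> ('f \<Rightarrow> 'v set) \<Rightarrow> 'v set \<Rightarrow> ('f \<Rightarrow> 'v \<Rightarrow> real) \<Rightarrow> real" where
  "q2_objective F Vf U x = (\<Sum>f\<in>F. \<Sum>v\<in>Vf f \<inter> U. x f v)"

definition opt_q2 ::
  "'f set \<Rightarrow> 'v set \<Rightarrow> ('f \<Rightarrow> real) \<Rightarrow> ('f \<Rightarrow> 'v set) \<Rightarrow> ('v \<Rightarrow> real) \<Rightarrow> 'v set \<Rightarrow> real" where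
  "opt_q2 F V lam Vf c U =
     Sup (q2_objective F Vf U ` {x. q2_feasible F V lam c U x})"

text \<open>Phase I of GCA, as a (nondeterministic) big-step relation over the sorted
  list of flows: phase1 lam Uf fs c A c' A' means processing fs starting from
  remaining capacities c and assigned set A may end in c', A'.
  Uf f stands for V_f \<inter> U.\<close>
inductive gca_phase1 ::
  "('f \<Rightarrow> real) \<Rightarrow> ('f \<Rightarrow> 'v set) \<Rightarrow> 'f list \<Rightarrow> ('v \<Rightarrow> real) \<Rightarrow> 'f set
     \<Rightarrow> ('v \<Rightarrow> real) \<Rightarrow> 'f set \<Rightarrow> bool"
  for lam :: "'f \<Rightarrow> real" and Uf :: "'f \<Rightarrow> 'v set" where
  p1_nil: "gca_phase1 lam Uf [] c A c A"
| p1_assign: "\<lbrakk> v \<in> Uf f; lam f \<le> c v;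
               gca_phase1 lam Uf fs (c(v := c v - lam f)) (insert f A) c' A' \<rbrakk>
             \<Longrightarrow> gca_phase1 lam Uf (f # fs) c A c' A'"
| p1_skip: "\<lbrakk> \<not> (\<exists>v\<in>Uf f. lam f \<le> c v); gca_phase1 lam Uf fs c A c' A' \<rbrakk>
             \<Longrightarrow> gca_phase1 lam Uf (f # fs) c A c' A'"

inductive gca_phase2 ::
  "('f \<Rightarrow> real) \<Rightarrow> ('f \<Rightarrow> 'v set) \<Rightarrow> 'f list \<Rightarrow> ('v \<Rightarrow> real) \<Rightarrow> 'f set
     \<Rightarrow> ('v \<Rightarrow> real) \<Rightarrow> 'f set \<Rightarrow> bool"
  for lam :: "'f \<Rightarrow> real" and Uf :: "'f \<Rightarrow> 'v set" where
  p2_nil: "gca_phase2 lam Uf [] c A c A"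
| p2_done: "\<lbrakk> f \<in> A; gca_phase2 lam Uf fs c A c' A' \<rbrakk>
             \<Longrightarrow> gca_phase2 lam Uf (f # fs) c A c' A'"
| p2_split: "\<lbrakk> f \<notin> A; lam f \<le> (\<Sum>v\<in>Uf f. c v);
               \<forall>v\<in>Uf f. 0 \<le> d v \<and> d v \<le> c v; (\<Sum>v\<in>Uf f. d v) = lam f;
               gca_phase2 lam Uf fs (\<lambda>v. if v \<in> Uf f then c v - d v else c v)
                 (insert f A) c' A' \<rbrakk>
             \<Longrightarrow> gca_phase2 lam Uf (f # fs) c A c' A'"
| p2_skip: "\<lbrakk> f \<notin> A; \<not> lam f \<le> (\<Sum>v\<in>Uf f. c v); gca_phase2 lam Uf fs c A c' A' \<rbrakk>
             \<Longrightarrow> gca_phase2 lam Uf (f # fs) c A c' A'"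

end

theory Submission
  imports Defs
begin

lemma p1_A: "gca_phase1 lam Uf fs c A c' A' \<Longrightarrow> A \<subseteq> A' \<and> A' \<subseteq> A \<union> set fs"
  by (induction rule: gca_phase1.induct) auto

lemma p1_c: "gca_phase1 lam Uf fs c A c' A' \<Longrightarrow> (\<forall>g\<in>set fs. 0 < lam g) \<Longrightarrow> (\<forall>v. c' v \<le> c v)"
proof (induction rule: gca_phase1.induct)
  case (p1_assign v f c fs A c' A')
  have pos: "0 < lam f" using p1_assign(5) by simp
  show ?case
  proof
    fix w
    have "c' w \<le> (c(v := c v - lam f)) w" using p1_assign(4,5) by simp
    then show "c' w \<le> c w" using pos by (cases "w = v") auto
  qed
qed auto

lemma p1_sum: "gca_phase1 lam Uf fs c A c' A' \<Longrightarrow> finite W \<Longrightarrow> (\<forall>g\<in>set fs. Uf g \<subseteq> W)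
  \<Longrightarrow> distinct fs \<Longrightarrow> A \<inter> set fs = {} \<Longrightarrow> (\<Sum>v\<in>W. c v - c' v) = (\<Sum>f\<in>A'-A. lam f)"
proof (induction rule: gca_phase1.induct)
  case (p1_nil c A)
  then show ?case by simp
next
  case (p1_assign v f c fs A c' A')
  let ?cn = "c(v := c v - lam f)"
  have vW: "v \<in> W" using p1_assign by auto
  have IH: "(\<Sum>w\<in>W. ?cn w - c' w) = (\<Sum>g\<in>A'-insert f A. lam g)"
    using p1_assign by auto
  have "(\<Sum>w\<in>W. c w - c' w) = (\<Sum>w\<in>W. (c w - ?cn w) + (?cn w - c' w))"
    by simp
  also have "\<dots> = (\<Sum>w\<in>W. c w - ?cn w) + (\<Sum>w\<in>W. ?cn w - c' w)"
    by (rule sum.distrib)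
  also have "(\<Sum>w\<in>W. c w - ?cn w) = (\<Sum>w\<in>W. if w = v then lam f else 0)"
    by (rule sum.cong) auto
  also have "\<dots> = lam f" using vW p1_assign(5) by simp
  finally have e: "(\<Sum>w\<in>W. c w - c' w) = lam f + (\<Sum>g\<in>A'-insert f A. lam g)" using IH by simp
  have fA: "f \<notin> A" using p1_assign by auto
  have fA': "f \<in> A'" using p1_A[OF p1_assign(3)] by auto
  have fin: "finite (A' - insert f A)" using p1_A[OF p1_assign(3)]
    by (meson Diff_subset_conv finite_set finite_subset)
  have "A' - A = insert f (A' - insert f A)" using fA fA' by auto
  moreover have "(\<Sum>g\<in>insert f (A'-insert f A). lam g) = lam f + (\<Sum>g\<in>A'-insert f A. lam g)"
    using fin by (intro sum.insert) auto
  ultimately have "(\<Sum>g\<in>A'-A. lam g) = lam f + (\<Sum>g\<in>A'-insert f A. lam g)"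
    by metis
  then show ?case using e by simp
next
  case (p1_skip f c fs A c' A')
  then show ?case by auto
qed

lemma p1_key: "gca_phase1 lam Uf fs c A c' A' \<Longrightarrow> (\<forall>g\<in>set fs. 0 < lam g)
  \<Longrightarrow> sorted_wrt (\<lambda>f g. lam g \<le> lam f) fs \<Longrightarrow> (\<forall>v. c v \<le> c0 v)
  \<Longrightarrow> (\<forall>v. c v < c0 v \<longrightarrow> (\<forall>g\<in>set fs. lam g \<le> c0 v - c v))
  \<Longrightarrow> (\<forall>g\<in>set fs. \<forall>v\<in>Uf g. lam g \<le> c0 v)
  \<Longrightarrow> (\<forall>f\<in>set fs - A'. \<forall>v\<in>Uf f. c0 v < 2*(c0 v - c' v))"
proof (induction rule: gca_phase1.induct)
  case (p1_nil c A)
  then show ?case by simp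
next
  case (p1_assign v f c fs A c' A')
  let ?cn = "c(v := c v - lam f)"
  have fA': "f \<in> A'" using p1_A[OF p1_assign(3)] by auto
  have pos: "0 < lam f" using p1_assign(5) by simp
  have h1: "\<forall>w. ?cn w \<le> c0 w"
  proof
    fix w show "?cn w \<le> c0 w" using p1_assign(7)[rule_format, of w] pos by auto
  qed
  have h2: "\<forall>w. ?cn w < c0 w \<longrightarrow> (\<forall>g\<in>set fs. lam g \<le> c0 w - ?cn w)"
  proof (intro allI impI ballI)
    fix w g assume w: "?cn w < c0 w" and g: "g \<in> set fs"
    show "lam g \<le> c0 w - ?cn w"
    proof (cases "w = v")
      case True
      have "lam g \<le> lam f" using p1_assign(6) g by simp
      have "c v \<le> c0 v" using p1_assign(7) by blast
      then show ?thesis using True \<open>lam g \<le> lam f\<close> by simp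
    next
      case False
      then show ?thesis using p1_assign(8) w g by auto
    qed
  qed
  have "\<forall>f\<in>set fs - A'. \<forall>v\<in>Uf f. c0 v < 2*(c0 v - c' v)"
    using p1_assign.IH p1_assign(5,6,9) h1 h2 by auto
  then show ?case using fA' by auto
next
  case (p1_skip f c fs A c' A')
  have rest: "\<forall>f\<in>set fs - A'. \<forall>v\<in>Uf f. c0 v < 2*(c0 v - c' v)"
    using p1_skip.IH p1_skip(4-8) by auto
  have cc: "\<forall>v. c' v \<le> c v" using p1_c[OF p1_skip(2)] p1_skip(4) by auto
  have "c0 v < 2*(c0 v - c' v)" if v: "v \<in> Uf f" for v
  proof -
    have a: "c v < lam f" using p1_skip(1) v by auto
    have b: "lam f \<le> c0 v" using p1_skip(8) v by auto
    have d: "lam f \<le> c0 v - c v" using p1_skip(7) a b by auto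
    show ?thesis using a d cc[rule_format, of v] by (simp add: algebra_simps)
  qed
  then show ?case using rest by auto
qed

lemma p2_A: "gca_phase2 lam Uf fs c A c' A' \<Longrightarrow> A \<subseteq> A' \<and> A' \<subseteq> A \<union> set fs"
  by (induction rule: gca_phase2.induct) auto

lemma p2_c: "gca_phase2 lam Uf fs c A c' A' \<Longrightarrow> (\<forall>v. c' v \<le> c v)"
proof (induction rule: gca_phase2.induct)
  case (p2_split f A c d fs c' A')
  show ?case
  proof
    fix v show "c' v \<le> c v" using p2_split(3) p2_split.IH[rule_format, of v]
      by (cases "v \<in> Uf f") auto
  qed
qed auto

lemma p2_sum: "gca_phase2 lam Uf fs c A c' A' \<Longrightarrow> finite W \<Longrightarrow> (\<forall>g\<in>set fs. Uf g \<subseteq> W)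
  \<Longrightarrow> (\<Sum>v\<in>W. c v - c' v) = (\<Sum>f\<in>A'-A. lam f)"
proof (induction rule: gca_phase2.induct)
  case (p2_nil c A)
  then show ?case by simp
next
  case (p2_done f A fs c c' A')
  have e: "A' - A = A' - insert f A" using p2_done(1) by auto
  have "insert f A = A" using p2_done(1) by auto
  then have "(\<Sum>v\<in>W. c v - c' v) = (\<Sum>f\<in>A'-insert f A. lam f)"
    using p2_done.IH p2_done(4,5) by simp
  then show ?case by (simp only: e)
next
  case (p2_split f A c d fs c' A')
  let ?cn = "\<lambda>v. if v \<in> Uf f then c v - d v else c v"
  have sub: "Uf f \<subseteq> W" using p2_split(8) by simp
  have IH: "(\<Sum>w\<in>W. ?cn w - c' w) = (\<Sum>g\<in>A'-insert f A. lam g)"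
    using p2_split.IH p2_split(7,8) by simp
  have "(\<Sum>w\<in>W. c w - c' w) = (\<Sum>w\<in>W. (c w - ?cn w) + (?cn w - c' w))"
    by simp
  also have "\<dots> = (\<Sum>w\<in>W. c w - ?cn w) + (\<Sum>w\<in>W. ?cn w - c' w)"
    by (rule sum.distrib)
  also have "(\<Sum>w\<in>W. c w - ?cn w) = (\<Sum>w\<in>W. if w \<in> Uf f then d w else 0)"
    by (rule sum.cong) auto
  also have "\<dots> = (\<Sum>w\<in>W \<inter> Uf f. d w)"
    using p2_split(7) by (simp add: sum.inter_restrict)
  also have "\<dots> = (\<Sum>w\<in>Uf f. d w)" using sub by (simp add: Int_absorb1)
  also have "\<dots> = lam f" by (rule p2_split(4))
  finally have e: "(\<Sum>w\<in>W. c w - c' w) = lam f + (\<Sum>g\<in>A'-insert f A. lam g)" using IH by simp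
  have fA: "f \<notin> A" using p2_split by auto
  have fA': "f \<in> A'" using p2_A[OF p2_split(5)] by auto
  have fin: "finite (A' - insert f A)" using p2_A[OF p2_split(5)]
    by (meson Diff_subset_conv finite_set finite_subset)
  have "A' - A = insert f (A' - insert f A)" using fA fA' by auto
  moreover have "(\<Sum>g\<in>insert f (A'-insert f A). lam g) = lam f + (\<Sum>g\<in>A'-insert f A. lam g)"
    using fin by (intro sum.insert) auto
  ultimately have "(\<Sum>g\<in>A'-A. lam g) = lam f + (\<Sum>g\<in>A'-insert f A. lam g)"
    by metis
  then show ?case using e by simp
next
  case (p2_skip f A c fs c' A')
  then show ?case by auto
qed


theorem lemma5:
  fixes V :: "'v set" and F :: "'f set"
    and lam :: "'f \<Rightarrow> real" and Vf :: "'f \<Rightarrow> 'v set" and c :: "'v \<Rightarrow> real"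
    and U :: "'v set" and fs :: "'f list"
    and c1 c2 :: "'v \<Rightarrow> real" and A1 A2 :: "'f set"
  assumes "finite V" and "finite F"
    and "\<forall>f\<in>F. 0 < lam f"
    and "\<forall>f\<in>F. Vf f \<subseteq> V"
    and "\<forall>v\<in>V. 0 < c v"
    and "\<forall>f\<in>F. \<forall>v\<in>V. lam f \<le> c v"
    and "U \<subseteq> V"
    and "distinct fs"
    and "set fs = {f\<in>F. Vf f \<inter> U \<noteq> {}}"
    and "sorted_wrt (\<lambda>f g. lam g \<le> lam f) fs"
    and "gca_phase1 lam (\<lambda>f. Vf f \<inter> U) fs c {} c1 A1"
    and "gca_phase2 lam (\<lambda>f. Vf f \<inter> U) fs c1 A1 c2 A2"
  shows "(\<Sum>f\<in>A2. lam f) \<ge> opt_q2 F V lam Vf c U / 3"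
proof -
  note p1 = assms(11) and p2 = assms(12)
  define S where "S = (\<Sum>f\<in>A2. lam f)"
  have fsF: "set fs \<subseteq> F" using assms(9) by auto
  have finU: "finite U" using assms(1,7) finite_subset by blast
  have A1s: "A1 \<subseteq> set fs" using p1_A[OF p1] by auto
  have A12: "A1 \<subseteq> A2" and A2s: "A2 \<subseteq> set fs" using p2_A[OF p2] A1s by auto
  have finA2: "finite A2" using A2s finite_subset by blast
  have pos: "\<forall>g\<in>set fs. 0 < lam g" using assms(3) fsF by auto
  have cc1: "\<forall>v. c1 v \<le> c v" using p1_c[OF p1 pos] .
  have cc2: "\<forall>v. c2 v \<le> c1 v" using p2_c[OF p2] .
  have UfU: "\<forall>g\<in>set fs. Vf g \<inter> U \<subseteq> U" by auto
  have cap: "\<forall>g\<in>set fs. \<forall>v\<in>Vf g \<inter> U. lam g \<le> c v"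
    using assms(6,7) fsF by blast
  have key: "\<forall>f\<in>set fs - A1. \<forall>v\<in>Vf f \<inter> U. c v < 2*(c v - c1 v)"
    using p1_key[OF p1 pos assms(10), of c] cap by auto
  have s1: "(\<Sum>v\<in>U. c v - c1 v) = (\<Sum>f\<in>A1. lam f)"
    using p1_sum[OF p1 finU UfU assms(8)] by simp
  have s2: "(\<Sum>v\<in>U. c1 v - c2 v) = (\<Sum>f\<in>A2 - A1. lam f)"
    using p2_sum[OF p2 finU UfU] .
  have sU: "(\<Sum>v\<in>U. c v - c2 v) = S"
  proof -
    have "(\<Sum>v\<in>U. c v - c2 v) = (\<Sum>v\<in>U. (c v - c1 v) + (c1 v - c2 v))" by simp
    also have "\<dots> = (\<Sum>f\<in>A1. lam f) + (\<Sum>f\<in>A2 - A1. lam f)"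
      by (simp only: sum.distrib s1 s2)
    also have "\<dots> = S" unfolding S_def using sum.subset_diff[OF A12 finA2, of lam] by simp
    finally show ?thesis .
  qed
  define R where "R = set fs - A2"
  define N where "N = (\<Union>f\<in>R. Vf f \<inter> U)"
  have NU: "N \<subseteq> U" unfolding N_def by auto
  have finN: "finite N" using NU finU finite_subset by blast
  have hN: "\<forall>v\<in>N. c v \<le> 2*(c v - c2 v)"
  proof
    fix v assume "v \<in> N"
    then obtain f where f: "f \<in> R" "v \<in> Vf f \<inter> U" unfolding N_def by auto
    have "f \<in> set fs - A1" using f(1) A12 unfolding R_def by auto
    then have "c v < 2*(c v - c1 v)" using key f(2) by blast
    then show "c v \<le> 2*(c v - c2 v)" using cc2[rule_format, of v] by (simp add: algebra_simps)
  qed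
  have NS: "(\<Sum>v\<in>N. c v) \<le> 2*S"
  proof -
    have "(\<Sum>v\<in>N. c v) \<le> (\<Sum>v\<in>N. 2*(c v - c2 v))" using hN by (intro sum_mono) auto
    also have "\<dots> = 2 * (\<Sum>v\<in>N. c v - c2 v)" by (simp add: sum_distrib_left)
    also have "(\<Sum>v\<in>N. c v - c2 v) \<le> (\<Sum>v\<in>U. c v - c2 v)"
      using finU NU cc1 cc2 by (intro sum_mono2) (auto intro: order_trans)
    finally show ?thesis using sU by simp
  qed
  have bound: "q2_objective F Vf U x \<le> 3*S" if fx: "q2_feasible F V lam c U x" for x
  proof -
    have x0: "\<forall>f\<in>F. \<forall>v\<in>V. 0 \<le> x f v" and xc: "\<forall>v\<in>U. (\<Sum>f\<in>F. x f v) \<le> c v"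
      and xl: "\<forall>f\<in>F. (\<Sum>v\<in>U. x f v) \<le> lam f"
      using fx unfolding q2_feasible_def by auto
    define h where "h f = (if f \<in> A2 then lam f else (\<Sum>v\<in>N. x f v))" for f
    have t: "(\<Sum>v\<in>Vf f \<inter> U. x f v) \<le> h f" if f: "f \<in> F" for f
    proof (cases "f \<in> A2")
      case True
      have "(\<Sum>v\<in>Vf f \<inter> U. x f v) \<le> (\<Sum>v\<in>U. x f v)"
        using finU x0 f assms(7) by (intro sum_mono2) auto
      then show ?thesis using True xl f unfolding h_def by fastforce
    next
      case False
      show ?thesis
      proof (cases "f \<in> set fs")
        case True
        then have "f \<in> R" using False unfolding R_def by auto
        then have "Vf f \<inter> U \<subseteq> N" unfolding N_def by auto
        then have "(\<Sum>v\<in>Vf f \<inter> U. x f v) \<le> (\<Sum>v\<in>N. x f v)"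
          using finN x0 f NU assms(7) by (intro sum_mono2) auto
        then show ?thesis using False unfolding h_def by simp
      next
        case False2: False
        then have "Vf f \<inter> U = {}" using assms(9) f by auto
        moreover have "0 \<le> (\<Sum>v\<in>N. x f v)"
          using x0 f NU assms(7) by (intro sum_nonneg) auto
        ultimately show ?thesis using False unfolding h_def by simp
      qed
    qed
    have "q2_objective F Vf U x \<le> (\<Sum>f\<in>F. h f)"
      unfolding q2_objective_def using t by (intro sum_mono) auto
    also have "(\<Sum>f\<in>F. h f) = (\<Sum>f\<in>F \<inter> A2. lam f) + (\<Sum>f\<in>F - A2. \<Sum>v\<in>N. x f v)"
    proof -
      have "(\<Sum>f\<in>F. h f) = (\<Sum>f\<in>F \<inter> {f. f \<in> A2}. lam f) + (\<Sum>f\<in>F \<inter> - {f. f \<in> A2}. \<Sum>v\<in>N. x f v)"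
        unfolding h_def by (rule sum.If_cases[OF assms(2)])
      moreover have "F \<inter> {f. f \<in> A2} = F \<inter> A2" "F \<inter> - {f. f \<in> A2} = F - A2" by auto
      ultimately show ?thesis by simp
    qed
    also have "F \<inter> A2 = A2" using A2s fsF by auto
    also have "(\<Sum>f\<in>F - A2. \<Sum>v\<in>N. x f v) \<le> (\<Sum>f\<in>F. \<Sum>v\<in>N. x f v)"
      using assms(2) x0 NU assms(7) by (intro sum_mono2) (auto intro!: sum_nonneg)
    also have "(\<Sum>f\<in>F. \<Sum>v\<in>N. x f v) = (\<Sum>v\<in>N. \<Sum>f\<in>F. x f v)" by (rule sum.swap)
    also have "\<dots> \<le> (\<Sum>v\<in>N. c v)" using xc NU by (intro sum_mono) auto
    finally show ?thesis using NS unfolding S_def by simp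
  qed
  have ne: "(\<lambda>f v. 0) \<in> {x. q2_feasible F V lam c U x}"
    unfolding q2_feasible_def using assms(3,5,7) by (auto intro: less_imp_le)
  have "opt_q2 F V lam Vf c U \<le> 3*S"
    unfolding opt_q2_def using ne bound by (intro cSup_least) auto
  then show ?thesis unfolding S_def by simp
qed

end
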